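(* With $\mathcal I_s$ as defined in the context, the probability that a uniformly random $(E,G_{p,n})\in\mathcal I_s$, with $E$ having constants $c_j=(\bar c_j,\beta_j)$, $j=1,\dots,m$, satisfies $\beta_i\neq1$ for some $i$, tends to $1$ exponentially fast as $s\to\infty$.
   Context: For a prime $p$ and $n\in\mathbb{N}$, $G_{p,n}=\mathbb{Z}_p^n\rtimes\mathbb{Z}_p^\ast$ is the set of pairs $(\bar x,\alpha)$ with $\bar x\in\mathbb{Z}_p^n$, $\alpha\in\mathbb{Z}_p^\ast$, with multiplication $(\bar x,\alpha)(\bar y,\beta)=(\bar x+\alpha\bar y,\alpha\beta)$. For $s\in\mathbb{N}$, $\mathcal I_s$ is the set of all pairs $(E,G_{p,n})$ where $p\le s$ is prime, $1\le n\le s$, $1\le m\le s$, and $E$ is a spherical equation $\prod_{j=1}^m z_j^{-1}c_jz_j=1$ with constants $c_1,\dots,c_m\in G_{p,n}$ (identified with $(c_1,\dots,c_m)\in G_{p,n}^m$), equipped with the uniform distribution. *)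

theory Defs
  imports Complex_Main "HOL-Computational_Algebra.Primes"
begin

text \<open>Elements of G_{p,n} = Z_p^n \<rtimes> Z_p^*: pairs (x, alpha), where x is a vector of
  length n with entries residues 0..p-1, and alpha a unit residue in 1..p-1.\<close>
definition Gpn :: "nat \<Rightarrow> nat \<Rightarrow> (nat list \<times> nat) set" where
  "Gpn p n = {(x, a). length x = n \<and> (\<forall>i\<in>set x. i < p) \<and> a \<in> {1..<p}}"

definition Gpn_mult :: "nat \<Rightarrow> nat list \<times> nat \<Rightarrow> nat list \<times> nat \<Rightarrow> nat list \<times> nat" where
  "Gpn_mult p g h = (map2 (\<lambda>u v. (u + snd g * v) mod p) (fst g) (fst h), (snd g * snd h) mod p)"

text \<open>The instance set I_s: a triple (p, n, cs) stands for the pair (E, G_{p,n}) where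
  E is the spherical equation with constants cs = [c_1,...,c_m], m = length cs.\<close>
definition Inst :: "nat \<Rightarrow> (nat \<times> nat \<times> (nat list \<times> nat) list) set" where
  "Inst s = {(p, n, cs). prime p \<and> p \<le> s \<and> 1 \<le> n \<and> n \<le> s \<and>
                         1 \<le> length cs \<and> length cs \<le> s \<and> set cs \<subseteq> Gpn p n}"

definition prob_nontriv :: "nat \<Rightarrow> real" where
  "prob_nontriv s = real (card {(p, n, cs) \<in> Inst s. \<exists>c\<in>set cs. snd c \<noteq> 1}) / real (card (Inst s))"

end

theory Submission
  imports Defs
begin

definition Vec :: "nat \<Rightarrow> nat \<Rightarrow> nat list set" where
  "Vec p n = {x. set x \<subseteq> {..<p} \<and> length x = n}"

lemma Vec_fin: "finite (Vec p n)" unfolding Vec_def by (rule finite_lists_length_eq) simp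
lemma Vec_card: "card (Vec p n) = p ^ n" unfolding Vec_def by (subst card_lists_length_eq) simp_all

lemma Gpn_eq: "Gpn p n = Vec p n \<times> {1..<p}"
  unfolding Gpn_def Vec_def by auto

lemma Gpn_fin: "finite (Gpn p n)" by (simp add: Gpn_eq Vec_fin)
lemma Gpn_card: "card (Gpn p n) = p ^ n * (p - 1)" by (simp add: Gpn_eq Vec_fin Vec_card card_cartesian_product)

lemma Inst_sub: "Inst s \<subseteq> (SIGMA p:{..s}. SIGMA n:{..s}. {cs. set cs \<subseteq> Gpn p n \<and> length cs \<le> s})"
  unfolding Inst_def by auto

lemma Inst_fin: "finite (Inst s)"
  by (rule finite_subset[OF Inst_sub]) (auto intro!: finite_lists_length_le Gpn_fin)

lemma poly_exp: "(s+1)*s^2*2^s \<le> 27*(3::nat)^s"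
proof (cases "s \<le> 7")
  case True
  then have "s \<in> {0,1,2,3,4,5,6,7}" by auto
  then show ?thesis by auto
next
  case False
  then have "7 \<le> s" by simp
  then show ?thesis
  proof (induction s rule: dec_induct)
    case base then show ?case by simp
  next
    case (step k)
    have k: "2*(k+2)*(k+1) \<le> 3*k^2"
    proof -
      have "6*k+4 \<le> k*k" proof -
        have "7*k \<le> k*k" using step(1) by (rule mult_le_mono1)
        then show ?thesis using step(1) by linarith
      qed
      then show ?thesis by (simp add: power2_eq_square algebra_simps)
    qed
    have "(Suc k+1)*(Suc k)^2*2^(Suc k) = 2*(k+2)*(k+1) * ((k+1)*2^k)"
      by (simp add: power2_eq_square algebra_simps)
    also have "\<dots> \<le> 3*k^2*((k+1)*2^k)" using k by (rule mult_right_mono) simp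
    also have "\<dots> = 3*((k+1)*k^2*2^k)" by (simp add: algebra_simps)
    also have "\<dots> \<le> 3*(27*3^k)" by (rule mult_le_mono2[OF step(3)])
    finally show ?case by simp
  qed
qed

lemma nat_ineq:
  fixes p0 :: nat assumes "p0 \<ge> 3" and "b \<le> (s+1)*s*s*p0^(s*s)" and "t \<ge> (p0^s*(p0-1))^s" and "s \<ge> 1"
  shows "real b / real t \<le> 27 * (3/4)^s"
proof -
  have pp: "(p0^s*(p0-1))^s = p0^(s*s) * (p0-1)^s" by (simp add: power_mult_distrib power_mult)
  have "2^s \<le> (p0-1)^s" using assms(1) by (intro power_mono) auto
  then have t2: "p0^(s*s) * 2^s \<le> t" using assms(3) pp by (metis dual_order.trans mult_le_mono2)
  have pos: "0 < p0^(s*s) * 2^s" using assms(1) by simp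
  have "real b / real t \<le> real ((s+1)*s*s*p0^(s*s)) / real (p0^(s*s) * 2^s)"
    apply (rule frac_le) using assms(2) t2 pos by (simp_all only: of_nat_le_iff of_nat_0_less_iff of_nat_0_le_iff)
  also have "\<dots> = real ((s+1)*s*s) / 2^s" using pos by (simp add: field_simps)
  also have "\<dots> \<le> 27 * (3/4)^s"
  proof -
    have "real ((s+1)*s^2*2^s) \<le> real (27*3^s)" using poly_exp[of s] by (simp only: of_nat_le_iff)
    then have "real ((s+1)*s*s) * 2^s \<le> 27*3^s" by (simp add: power2_eq_square algebra_simps)
    moreover have "(4::real)^s = 2^s*2^s" by (simp add: power_mult_distrib[symmetric])
    ultimately have "real ((s+1)*s*s) / 2^s = real ((s+1)*s*s) * 2^s / 4^s" by simp
    also have "\<dots> \<le> 27*3^s / 4^s" by (rule divide_right_mono) (fact, simp)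
    also have "\<dots> = 27 * (3/4)^s" by (simp add: power_divide)
    finally show ?thesis .
  qed
  finally show ?thesis .
qed

definition L :: "nat \<Rightarrow> nat \<Rightarrow> nat \<Rightarrow> (nat list \<times> nat) list set" where
  "L p n m = {cs. set cs \<subseteq> Vec p n \<times> {1} \<and> length cs = m}"

lemma L_fin: "finite (L p n m)" unfolding L_def by (rule finite_lists_length_eq) (simp add: Vec_fin)
lemma L_card: "card (L p n m) = (p^n)^m" unfolding L_def
  by (subst card_lists_length_eq) (simp_all add: Vec_fin Vec_card card_cartesian_product)

lemma bad_bound:
  assumes P: "\<forall>p\<in>P. p \<le> p0" "P \<subseteq> {..s}" and p0: "p0 \<ge> 1"
  shows "card (SIGMA p:P. SIGMA n:{1..s}. \<Union>m\<in>{1..s}. L p n m) \<le> (s+1)*s*s*p0^(s*s)"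
proof -
  have fP: "finite P" using P(2) finite_subset by blast
  have inner: "card (\<Union>m\<in>{1..s}. L p n m) \<le> s*p0^(s*s)" if "p \<le> p0" "n \<in> {1..s}" for p n
  proof -
    have "card (\<Union>m\<in>{1..s}. L p n m) \<le> (\<Sum>m\<in>{1..s}. card (L p n m))" by (rule card_UN_le) simp
    also have "\<dots> \<le> (\<Sum>m\<in>{1..s}. p0^(s*s))"
    proof (rule sum_mono)
      fix m assume m: "m \<in> {1..s}"
      have "card (L p n m) = p^(n*m)" by (simp add: L_card power_mult)
      also have "\<dots> \<le> p0^(n*m)" using that by (simp add: power_mono)
      also have "\<dots> \<le> p0^(s*s)" using p0 m that(2) by (intro power_increasing) (auto intro: mult_le_mono)
      finally show "card (L p n m) \<le> p0^(s*s)" .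
    qed
    finally show ?thesis by simp
  qed
  have "card (SIGMA p:P. SIGMA n:{1..s}. \<Union>m\<in>{1..s}. L p n m)
      = (\<Sum>p\<in>P. \<Sum>n\<in>{1..s}. card (\<Union>m\<in>{1..s}. L p n m))"
    using fP by (simp add: L_fin)
  also have "\<dots> \<le> (\<Sum>p\<in>P. \<Sum>n\<in>{1..s}. s*p0^(s*s))"
    using inner P(1) by (intro sum_mono) auto
  also have "\<dots> = card P * (s * (s*p0^(s*s)))" by simp
  also have "\<dots> \<le> (s+1) * (s * (s*p0^(s*s)))"
    using card_mono[OF _ P(2)] by (intro mult_le_mono1) simp
  finally show ?thesis by (simp add: algebra_simps)
qed

lemma main_bound:
  assumes s: "s \<ge> 3"
  shows "\<bar>1 - prob_nontriv s\<bar> \<le> 27 * (3/4)^s"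
proof -
  define P where "P = {p. prime p \<and> p \<le> s}"
  have fP: "finite P" unfolding P_def by simp
  have "3 \<in> P" unfolding P_def using s by simp
  then have neP: "P \<noteq> {}" by auto
  define p0 where "p0 = Max P"
  have p0P: "p0 \<in> P" unfolding p0_def using fP neP by (rule Max_in)
  have p0ge: "p0 \<ge> 3" unfolding p0_def using fP \<open>3 \<in> P\<close> by (rule Max_ge)
  have pleP: "\<forall>p\<in>P. p \<le> p0" unfolding p0_def using fP by simp
  define B where "B = {(p, n, cs) \<in> Inst s. \<forall>c\<in>set cs. snd c = 1}"
  define G where "G = {(p, n, cs) \<in> Inst s. \<exists>c\<in>set cs. snd c \<noteq> 1}"
  have part: "Inst s = G \<union> B" "G \<inter> B = {}" unfolding G_def B_def by auto
  have fG: "finite G" and fB: "finite B" using Inst_fin part(1) by (metis finite_Un)+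
  have cI: "card (Inst s) = card G + card B" using part fG fB by (simp add: card_Un_disjoint)
  have Bsub: "B \<subseteq> (SIGMA p:P. SIGMA n:{1..s}. \<Union>m\<in>{1..s}. L p n m)"
  proof
    fix x assume "x \<in> B"
    then obtain p n cs where x: "x = (p,n,cs)" and I: "(p,n,cs) \<in> Inst s" and b: "\<forall>c\<in>set cs. snd c = 1"
      unfolding B_def by auto
    have Ii: "prime p" "p \<le> s" "1 \<le> n" "n \<le> s" "1 \<le> length cs" "length cs \<le> s" "set cs \<subseteq> Gpn p n"
      using I unfolding Inst_def by simp_all
    have "set cs \<subseteq> Vec p n \<times> {1}"
    proof
      fix c assume c: "c \<in> set cs"
      then have "c \<in> Vec p n \<times> {1..<p}" using Ii(7) Gpn_eq by blast
      moreover have "snd c = 1" using b c by blast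
      ultimately show "c \<in> Vec p n \<times> {1}" by (cases c) simp
    qed
    then have "cs \<in> L p n (length cs)" unfolding L_def by simp
    moreover have "length cs \<in> {1..s}" "n \<in> {1..s}" using Ii by simp_all
    moreover have "p \<in> P" unfolding P_def using Ii by simp
    ultimately show "x \<in> (SIGMA p:P. SIGMA n:{1..s}. \<Union>m\<in>{1..s}. L p n m)"
      unfolding x by blast
  qed
  have cB: "card B \<le> (s+1)*s*s*p0^(s*s)"
  proof -
    have "finite (SIGMA p:P. SIGMA n:{1..s}. \<Union>m\<in>{1..s}. L p n m)"
      using fP by (intro finite_SigmaI finite_UN_I) (simp_all add: L_fin)
    then have "card B \<le> card (SIGMA p:P. SIGMA n:{1..s}. \<Union>m\<in>{1..s}. L p n m)"
      using Bsub by (rule card_mono)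
    also have "\<dots> \<le> (s+1)*s*s*p0^(s*s)"
      using pleP p0ge by (intro bad_bound) (auto simp: P_def)
    finally show ?thesis .
  qed
  have Isup: "(\<lambda>cs. (p0, s, cs)) ` {cs. set cs \<subseteq> Gpn p0 s \<and> length cs = s} \<subseteq> Inst s"
  proof
    fix x assume "x \<in> (\<lambda>cs. (p0, s, cs)) ` {cs. set cs \<subseteq> Gpn p0 s \<and> length cs = s}"
    then obtain cs where x: "x = (p0, s, cs)" and cs: "set cs \<subseteq> Gpn p0 s" "length cs = s" by blast
    have "prime p0" "p0 \<le> s" using p0P unfolding P_def by simp_all
    then show "x \<in> Inst s" unfolding x Inst_def using cs s by simp
  qed
  have cI2: "card (Inst s) \<ge> (p0^s*(p0-1))^s"
  proof -
    have "card ((\<lambda>cs. (p0, s, cs)) ` {cs. set cs \<subseteq> Gpn p0 s \<and> length cs = s}) = (p0^s*(p0-1))^s"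
      by (subst card_image) (auto simp: inj_on_def card_lists_length_eq Gpn_fin Gpn_card)
    then show ?thesis using card_mono[OF Inst_fin Isup] by simp
  qed
  have "(p0^s*(p0-1))^s > 0" using p0ge by simp
  then have tpos: "card (Inst s) > 0" using cI2 by linarith
  have prob: "prob_nontriv s = real (card G) / real (card (Inst s))"
    unfolding prob_nontriv_def G_def by simp
  have "1 - prob_nontriv s = real (card B) / real (card (Inst s))"
  proof -
    have T: "real (card (Inst s)) > 0" using tpos by simp
    have "real (card (Inst s)) = real (card G) + real (card B)" using cI by simp
    then show ?thesis unfolding prob using T by (simp add: field_simps del: of_nat_add)
  qed
  moreover have "real (card B) / real (card (Inst s)) \<le> 27 * (3/4)^s"
    using p0ge cB cI2 s by (intro nat_ineq) auto
  ultimately show ?thesis by simp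
qed

lemma small_bound: "\<bar>1 - prob_nontriv s\<bar> \<le> 1"
proof -
  have "card {(p, n, cs) \<in> Inst s. \<exists>c\<in>set cs. snd c \<noteq> 1} \<le> card (Inst s)"
    by (rule card_mono[OF Inst_fin]) auto
  then have "prob_nontriv s \<le> 1" "0 \<le> prob_nontriv s"
    unfolding prob_nontriv_def by (auto simp: divide_le_eq_1)
  then show ?thesis by simp
qed

theorem lemma4p4:
  shows "\<exists>C q::real. 0 < q \<and> q < 1 \<and> (\<forall>s\<ge>2. \<bar>1 - prob_nontriv s\<bar> \<le> C * q ^ s)"
proof (intro exI conjI allI impI)
  fix s :: nat assume s: "s \<ge> 2"
  show "\<bar>1 - prob_nontriv s\<bar> \<le> 27 * (3/4) ^ s"
  proof (cases "s = 2")
    case True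
    have "(1::real) \<le> 27 * (3/4)^2" by (simp add: power2_eq_square)
    then show ?thesis using small_bound[of s] True by simp
  next
    case False then show ?thesis using s main_bound by simp
  qed
qed auto

end
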